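(* Let $Q$ be a dimer quiver on a torus having at least one perfect matching, with dimer algebra $A$, and let $u\in\mathbb Z^2\setminus\{0\}$. If $p,q\in\mathcal C^u$, then $\bar\tau(p)=\bar\tau(q)\sigma^n$ for some $n\in\mathbb Z$. In particular, if $\sigma\nmid\bar\tau(p)$ and $\sigma\nmid\bar\tau(q)$, then $\bar\tau(p)=\bar\tau(q)$.
   Context: $k$ is an algebraically closed field. A dimer quiver on a torus is a finite quiver $Q$ embedded in $T^2$ such that each connected component of $T^2\setminus Q$ is simply connected and bounded by an oriented cycle (a unit cycle). Paths compose right to left. $A=kQ/I$, $I=\langle p-q\mid\exists a\in Q_1: ap,aq\text{ unit cycles}\rangle$. A perfect matching is a set of arrows containing exactly one arrow of each unit cycle; it is simple if any two vertices are joined by an oriented path avoiding its arrows; $\mathcal S$ is the set of simple matchings, $B=k[x_D\mid D\in\mathcal S]$, $\sigma=\prod_{D\in\mathcal S}x_D$. $\tau:A\to M_{|Q_0|}(B)$ is induced by $e_i\mapsto e_{ii}$, $a\mapsto\prod_{a\in D\in\mathcal S}x_D\,e_{\operatorname{h}(a),\operatorname{t}(a)}$; for $p\in e_jAe_i$, $\tau(p)=\bar\tau(p)e_{ji}$. Divisibility is in $B$. Let $\pi:\mathbb R^2\to T^2$ be a covering with $\pi(\mathbb Z^2)$ a single vertex, $Q^+=\pi^{-1}(Q)$, $p^+$ a lift of a path $p$. A cycle of $A$ is the class mod $I$ of a cycle of $Q$; $\mathcal C^u$ is the set of cycles $p$ with $\operatorname{h}(p^+)=\operatorname{t}(p^+)+u$.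 *)

theory Defs
  imports Main "HOL-Library.Product_Plus" "HOL-Combinatorics.Permutations"
begin

text \<open>The unit cycles are the orbits of two permutations sp (positive unit cycles)
  and sm (negative unit cycles) of Q1: sp a (resp. sm a) is the arrow following a
  in the positive (resp. negative) unit cycle containing a.
  d a :: int * int is the lattice displacement of the lift of a to the covering
  pi : R^2 -> T^2, i.e. the lift of a starting at a lift x of tQ a ends at the
  lift of hQ a lying in the same fundamental translate shifted by d a, so the lift
  of a path p satisfies h(p+) - t(p+) = sum of d over the arrows of p
  (for cycles; vertex positions telescope).\<close>

definition orb :: "('a \<Rightarrow> 'a) \<Rightarrow> 'a \<Rightarrow> 'a set" where
  "orb f a = {(f ^^ n) a | n. True}"

text \<open>Paths are lists of arrows in traversal order: the path a_n ... a_1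
  (composition right to left) is the list [a_1, ..., a_n].\<close>

definition is_path :: "'a set \<Rightarrow> ('a \<Rightarrow> 'v) \<Rightarrow> ('a \<Rightarrow> 'v) \<Rightarrow> 'a list \<Rightarrow> bool" where
  "is_path Q1 hQ tQ p \<longleftrightarrow> set p \<subseteq> Q1 \<and>
     (\<forall>i. Suc i < length p \<longrightarrow> hQ (p ! i) = tQ (p ! Suc i))"

definition path_from_to ::
  "'a set \<Rightarrow> ('a \<Rightarrow> 'v) \<Rightarrow> ('a \<Rightarrow> 'v) \<Rightarrow> 'v \<Rightarrow> 'v \<Rightarrow> 'a list \<Rightarrow> bool" where
  "path_from_to Q1 hQ tQ i j p \<longleftrightarrow> is_path Q1 hQ tQ p \<and>
     ((p = [] \<and> i = j) \<or> (p \<noteq> [] \<and> tQ (hd p) = i \<and> hQ (last p) = j))"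

definition is_cycle :: "'a set \<Rightarrow> ('a \<Rightarrow> 'v) \<Rightarrow> ('a \<Rightarrow> 'v) \<Rightarrow> 'a list \<Rightarrow> bool" where
  "is_cycle Q1 hQ tQ p \<longleftrightarrow> p \<noteq> [] \<and> is_path Q1 hQ tQ p \<and> hQ (last p) = tQ (hd p)"

text \<open>Cellular chain complex of the torus: 1-chains are functions Q1 -> int.\<close>
definition closed_chain ::
  "'v set \<Rightarrow> 'a set \<Rightarrow> ('a \<Rightarrow> 'v) \<Rightarrow> ('a \<Rightarrow> 'v) \<Rightarrow> ('a \<Rightarrow> int) \<Rightarrow> bool" where
  "closed_chain Q0 Q1 hQ tQ c \<longleftrightarrow> (\<forall>a. a \<notin> Q1 \<longrightarrow> c a = 0) \<and>
     (\<forall>v\<in>Q0. (\<Sum>a\<in>{a\<in>Q1. hQ a = v}. c a) = (\<Sum>a\<in>{a\<in>Q1. tQ a = v}. c a))"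

definition boundary_chain ::
  "'a set \<Rightarrow> ('a \<Rightarrow> 'a) \<Rightarrow> ('a \<Rightarrow> 'a) \<Rightarrow> ('a \<Rightarrow> int) \<Rightarrow> bool" where
  "boundary_chain Q1 sp sm c \<longleftrightarrow> (\<exists>f g :: 'a \<Rightarrow> int. \<forall>b\<in>Q1.
      c b = (\<Sum>a\<in>Q1. f a * (if b \<in> orb sp a then 1 else 0)
                     + g a * (if b \<in> orb sm a then 1 else 0)))"

definition chain_disp :: "'a set \<Rightarrow> ('a \<Rightarrow> int \<times> int) \<Rightarrow> ('a \<Rightarrow> int) \<Rightarrow> int \<times> int" where
  "chain_disp Q1 d c = ((\<Sum>a\<in>Q1. c a * fst (d a)), (\<Sum>a\<in>Q1. c a * snd (d a)))"

text \<open>Q (with unit cycles given by sp, sm) is a dimer quiver cellularly embedded in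
  a torus, and d is the displacement data of a covering pi : R^2 -> T^2 with deck
  group Z^2 (i.e. the induced map H_1(T^2) -> Z^2 is an isomorphism).\<close>
definition dimer_torus ::
  "'v set \<Rightarrow> 'a set \<Rightarrow> ('a \<Rightarrow> 'v) \<Rightarrow> ('a \<Rightarrow> 'v) \<Rightarrow> ('a \<Rightarrow> 'a) \<Rightarrow> ('a \<Rightarrow> 'a)
    \<Rightarrow> ('a \<Rightarrow> int \<times> int) \<Rightarrow> bool" where
  "dimer_torus Q0 Q1 hQ tQ sp sm d \<longleftrightarrow>
     finite Q0 \<and> finite Q1 \<and> Q0 \<noteq> {} \<and>
     (\<forall>a\<in>Q1. hQ a \<in> Q0 \<and> tQ a \<in> Q0) \<and>
     sp permutes Q1 \<and> sm permutes Q1 \<and>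
     (\<forall>a\<in>Q1. tQ (sp a) = hQ a \<and> tQ (sm a) = hQ a) \<and>
     \<comment> \<open>surface: the link of each vertex is a single circle\<close>
     (\<forall>v\<in>Q0. {a\<in>Q1. hQ a = v} \<noteq> {} \<and>
        (\<forall>a\<in>Q1. \<forall>b\<in>Q1. hQ a = v \<longrightarrow> hQ b = v \<longrightarrow>
           b \<in> orb (inv_into Q1 sm \<circ> sp) a)) \<and>
     \<comment> \<open>connected\<close>
     (\<forall>v\<in>Q0. \<forall>w\<in>Q0. (v, w) \<in> ({(tQ a, hQ a) | a. a \<in> Q1} \<union> {(hQ a, tQ a) | a. a \<in> Q1})\<^sup>*) \<and>
     \<comment> \<open>Euler characteristic 0 (genus one)\<close>
     int (card Q0) - int (card Q1) + int (card (orb sp ` Q1)) + int (card (orb sm ` Q1)) = 0 \<and>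
     \<comment> \<open>covering data: unit cycles lift to closed cycles\<close>
     (\<forall>a\<in>Q1. (\<Sum>b\<in>orb sp a. d b) = 0 \<and> (\<Sum>b\<in>orb sm a. d b) = 0) \<and>
     \<comment> \<open>H_1(T^2) -> Z^2 induced by d is an isomorphism\<close>
     (\<forall>c. closed_chain Q0 Q1 hQ tQ c \<longrightarrow>
        (chain_disp Q1 d c = (0, 0) \<longleftrightarrow> boundary_chain Q1 sp sm c)) \<and>
     (\<forall>z. \<exists>c. closed_chain Q0 Q1 hQ tQ c \<and> chain_disp Q1 d c = z)"

text \<open>p is a cycle of Q in C^u: h(p+) = t(p+) + u.\<close>
definition in_C ::
  "'a set \<Rightarrow> ('a \<Rightarrow> 'v) \<Rightarrow> ('a \<Rightarrow> 'v) \<Rightarrow> ('a \<Rightarrow> int \<times> int) \<Rightarrow> int \<times> int \<Rightarrow> 'a list \<Rightarrow> bool" where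
  "in_C Q1 hQ tQ d u p \<longleftrightarrow> is_cycle Q1 hQ tQ p \<and> sum_list (map d p) = u"

definition perfect_matching :: "'a set \<Rightarrow> ('a \<Rightarrow> 'a) \<Rightarrow> ('a \<Rightarrow> 'a) \<Rightarrow> 'a set \<Rightarrow> bool" where
  "perfect_matching Q1 sp sm D \<longleftrightarrow> D \<subseteq> Q1 \<and>
     (\<forall>a\<in>Q1. card (D \<inter> orb sp a) = 1 \<and> card (D \<inter> orb sm a) = 1)"

definition simple_matching ::
  "'v set \<Rightarrow> 'a set \<Rightarrow> ('a \<Rightarrow> 'v) \<Rightarrow> ('a \<Rightarrow> 'v) \<Rightarrow> ('a \<Rightarrow> 'a) \<Rightarrow> ('a \<Rightarrow> 'a) \<Rightarrow> 'a set \<Rightarrow> bool" where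
  "simple_matching Q0 Q1 hQ tQ sp sm D \<longleftrightarrow> perfect_matching Q1 sp sm D \<and>
     (\<forall>i\<in>Q0. \<forall>j\<in>Q0. \<exists>p. path_from_to (Q1 - D) hQ tQ i j p)"

text \<open>tau_bar p is a monomial in B = k[x_D | D in S]; we represent it by its
  exponent vector: the exponent of x_D is the number of arrows of p
  (with multiplicity) lying in D.\<close>
definition tau_bar :: "'a set set \<Rightarrow> 'a list \<Rightarrow> 'a set \<Rightarrow> nat" where
  "tau_bar S p D = (if D \<in> S then length (filter (\<lambda>a. a \<in> D) p) else 0)"

text \<open>sigma = product of all x_D, D in S; monomial divisibility.\<close>
definition sigma_mono :: "'a set set \<Rightarrow> 'a set \<Rightarrow> nat" where
  "sigma_mono S D = (if D \<in> S then 1 else 0)"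

definition mono_dvd :: "('a set \<Rightarrow> nat) \<Rightarrow> ('a set \<Rightarrow> nat) \<Rightarrow> bool" where
  "mono_dvd m1 m2 \<longleftrightarrow> (\<forall>D. m1 D \<le> m2 D)"

text \<open>m1 = m2 * sigma^n with n an integer (in the fraction field of B).\<close>
definition eq_sigma_pow :: "'a set set \<Rightarrow> ('a set \<Rightarrow> nat) \<Rightarrow> ('a set \<Rightarrow> nat) \<Rightarrow> int \<Rightarrow> bool" where
  "eq_sigma_pow S m1 m2 n \<longleftrightarrow> (\<forall>D. int (m1 D) = int (m2 D) + n * int (sigma_mono S D))"

end

theory Submission
  imports Defs
begin

lemma sum_count_gen:
  fixes f :: "'a \<Rightarrow> 'b::comm_ring_1"
  assumes "set xs \<subseteq> X" "finite X"
  shows "(\<Sum>x\<in>X. of_nat (count_list xs x) * f x) = sum_list (map f xs)"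
  using assms(1)
proof (induction xs)
  case Nil then show ?case by simp
next
  case (Cons y ys)
  have "(\<Sum>x\<in>X. of_nat (count_list (y # ys) x) * f x)
      = (\<Sum>x\<in>X. (if y = x then f x else 0) + of_nat (count_list ys x) * f x)"
    by (rule sum.cong) (auto simp: algebra_simps)
  also have "\<dots> = f y + (\<Sum>x\<in>X. of_nat (count_list ys x) * f x)"
    using Cons.prems assms(2) by (simp add: sum.distrib sum.delta)
  finally show ?case using Cons by simp
qed

lemma cycle_heads_tails:
  assumes "is_cycle Q1 hQ tQ p"
  shows "rotate1 (map tQ p) = map hQ p"
proof (rule nth_equalityI)
  show "length (rotate1 (map tQ p)) = length (map hQ p)" by simp
next
  fix i assume i: "i < length (rotate1 (map tQ p))"
  hence il: "i < length p" by simp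
  have ne: "p \<noteq> []" and pa: "is_path Q1 hQ tQ p" and cl: "hQ (last p) = tQ (hd p)"
    using assms unfolding is_cycle_def by auto
  have "rotate1 (map tQ p) ! i = map tQ p ! (Suc i mod length p)"
    using il by (simp add: nth_rotate1)
  also have "\<dots> = hQ (p ! i)"
  proof (cases "Suc i < length p")
    case True
    then show ?thesis using pa unfolding is_path_def by simp
  next
    case False
    hence "Suc i = length p" using il by simp
    hence "i = length p - 1" by simp
    hence "Suc i mod length p = 0" "p ! i = last p" using ne \<open>Suc i = length p\<close> by (auto simp: last_conv_nth)
    then show ?thesis using cl ne by (simp add: hd_conv_nth)
  qed
  finally show "rotate1 (map tQ p) ! i = map hQ p ! i" using il by simp
qed

lemma rotate1_mset: "mset (rotate1 xs) = mset xs"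
  by (cases xs) auto

lemma cycle_count_closed:
  assumes "is_cycle Q1 hQ tQ p" "finite Q1"
  shows "(\<Sum>a\<in>{a\<in>Q1. hQ a = v}. int (count_list p a)) = (\<Sum>a\<in>{a\<in>Q1. tQ a = v}. int (count_list p a))"
proof -
  have sub: "set p \<subseteq> Q1" using assms(1) unfolding is_cycle_def is_path_def by auto
  have h: "(\<Sum>a\<in>{a\<in>Q1. P a}. int (count_list p a)) = sum_list (map (\<lambda>a. if P a then 1 else 0::int) p)" for P
  proof -
    have "(\<Sum>a\<in>{a\<in>Q1. P a}. int (count_list p a)) = (\<Sum>a\<in>Q1. of_nat (count_list p a) * (if P a then 1 else 0::int))"
      using assms(2) by (simp add: sum.inter_filter[symmetric] if_distrib cong: if_cong)
    also have "\<dots> = sum_list (map (\<lambda>a. if P a then 1 else 0::int) p)"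
      by (rule sum_count_gen[OF sub assms(2)])
    finally show ?thesis .
  qed
  define F where "F = (\<lambda>x. if x = v then 1 else 0::int)"
  have "mset (map tQ p) = mset (map hQ p)"
    using rotate1_mset[of "map tQ p"] cycle_heads_tails[OF assms(1)] by simp
  hence "mset (map F (map hQ p)) = mset (map F (map tQ p))" by (simp only: mset_map)
  hence "sum_list (map F (map hQ p)) = sum_list (map F (map tQ p))" by (metis sum_mset_sum_list)
  hence "sum_list (map (\<lambda>x. if x = v then 1 else 0::int) (map hQ p)) = sum_list (map (\<lambda>x. if x = v then 1 else 0::int) (map tQ p))"
    unfolding F_def .
  then show ?thesis by (simp add: h comp_def)
qed

theorem lemma4p18:
  fixes Q0 :: "'v set" and Q1 :: "'a set" and hQ tQ :: "'a \<Rightarrow> 'v"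
    and sp sm :: "'a \<Rightarrow> 'a" and d :: "'a \<Rightarrow> int \<times> int"
    and u :: "int \<times> int" and p q :: "'a list"
  defines "S \<equiv> {D. simple_matching Q0 Q1 hQ tQ sp sm D}"
  assumes "dimer_torus Q0 Q1 hQ tQ sp sm d"
    and "\<exists>D. perfect_matching Q1 sp sm D"
    and "u \<noteq> (0, 0)"
    and "in_C Q1 hQ tQ d u p" and "in_C Q1 hQ tQ d u q"
  shows "(\<exists>n::int. eq_sigma_pow S (tau_bar S p) (tau_bar S q) n) \<and>
         (\<not> mono_dvd (sigma_mono S) (tau_bar S p) \<and> \<not> mono_dvd (sigma_mono S) (tau_bar S q)
            \<longrightarrow> tau_bar S p = tau_bar S q)"
proof -
  have fin: "finite Q1" and bd: "\<And>c. closed_chain Q0 Q1 hQ tQ c \<Longrightarrow> chain_disp Q1 d c = (0, 0) \<Longrightarrow> boundary_chain Q1 sp sm c"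
    using assms(2) unfolding dimer_torus_def by auto
  have cp: "is_cycle Q1 hQ tQ p" and up: "sum_list (map d p) = u"
    and cq: "is_cycle Q1 hQ tQ q" and uq: "sum_list (map d q) = u"
    using assms(5,6) unfolding in_C_def by auto
  have sp': "set p \<subseteq> Q1" using cp unfolding is_cycle_def is_path_def by auto
  have sq': "set q \<subseteq> Q1" using cq unfolding is_cycle_def is_path_def by auto
  define c where "c b = int (count_list p b) - int (count_list q b)" for b
  have fstl: "fst (sum_list xs) = sum_list (map fst xs)" "snd (sum_list xs) = sum_list (map snd xs)"
    for xs :: "(int \<times> int) list" by (induction xs) auto
  have cc: "closed_chain Q0 Q1 hQ tQ c"
    unfolding closed_chain_def
  proof (intro conjI allI impI ballI)
    fix a assume "a \<notin> Q1"
    then have "a \<notin> set p" "a \<notin> set q" using sp' sq' by auto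
    then show "c a = 0" unfolding c_def by (simp add: count_list_0_iff)
  next
    fix v
    show "(\<Sum>a\<in>{a\<in>Q1. hQ a = v}. c a) = (\<Sum>a\<in>{a\<in>Q1. tQ a = v}. c a)"
      unfolding c_def sum_subtractf
      using cycle_count_closed[OF cp fin, of v] cycle_count_closed[OF cq fin, of v] by simp
  qed
  have disp_gen: "(\<Sum>a\<in>Q1. c a * w a) = sum_list (map w p) - sum_list (map w q)" for w :: "'a \<Rightarrow> int"
  proof -
    have "(\<Sum>a\<in>Q1. c a * w a) = (\<Sum>a\<in>Q1. of_nat (count_list p a) * w a) - (\<Sum>a\<in>Q1. of_nat (count_list q a) * w a)"
      unfolding c_def by (simp add: left_diff_distrib sum_subtractf)
    then show ?thesis using sum_count_gen[OF sp' fin, of w] sum_count_gen[OF sq' fin, of w] by simp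
  qed
  have "chain_disp Q1 d c = (0, 0)"
    unfolding chain_disp_def
    using disp_gen[of "\<lambda>a. fst (d a)"] disp_gen[of "\<lambda>a. snd (d a)"] up uq fstl[of "map d p"] fstl[of "map d q"]
    by (simp add: comp_def)
  then have "boundary_chain Q1 sp sm c" using bd cc by blast
  then obtain f g :: "'a \<Rightarrow> int" where fg: "\<And>b. b \<in> Q1 \<Longrightarrow> c b = (\<Sum>a\<in>Q1. f a * (if b \<in> orb sp a then 1 else 0)
                     + g a * (if b \<in> orb sm a then 1 else 0))"
    unfolding boundary_chain_def by blast
  define n where "n = (\<Sum>a\<in>Q1. f a + g a)"
  have key: "int (tau_bar S p D) = int (tau_bar S q D) + n" if DS: "D \<in> S" for D
  proof -
    have pm: "perfect_matching Q1 sp sm D" using DS unfolding S_def simple_matching_def by auto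
    then have DQ: "D \<subseteq> Q1" and c1: "\<And>a. a \<in> Q1 \<Longrightarrow> card (D \<inter> orb sp a) = 1 \<and> card (D \<inter> orb sm a) = 1"
      unfolding perfect_matching_def by auto
    have lf: "int (length (filter (\<lambda>a. a \<in> D) xs)) = sum_list (map (\<lambda>a. if a \<in> D then 1 else 0::int) xs)" for xs
      by (induction xs) auto
    have cardeq: "(\<Sum>b\<in>Q1. (if b \<in> Ob then 1 else 0) * (if b \<in> D then 1 else (0::int))) = int (card (D \<inter> Ob))" for Ob
    proof -
      have "(\<Sum>b\<in>Q1. (if b \<in> Ob then 1 else 0) * (if b \<in> D then 1 else (0::int))) = (\<Sum>b\<in>Q1. if b \<in> D \<inter> Ob then 1 else 0)"
        by (rule sum.cong) auto
      also have "\<dots> = int (card (Q1 \<inter> (D \<inter> Ob)))" using fin by (simp add: sum.If_cases) (simp add: Int_def)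
      also have "Q1 \<inter> (D \<inter> Ob) = D \<inter> Ob" using DQ by blast
      finally show ?thesis .
    qed
    have "int (tau_bar S p D) - int (tau_bar S q D) = (\<Sum>b\<in>Q1. c b * (if b \<in> D then 1 else 0))"
      using DS disp_gen[of "\<lambda>a. if a \<in> D then 1 else 0"] unfolding tau_bar_def by (simp add: lf)
    also have "\<dots> = (\<Sum>b\<in>Q1. \<Sum>a\<in>Q1. f a * ((if b \<in> orb sp a then 1 else 0) * (if b \<in> D then 1 else 0))
                     + g a * ((if b \<in> orb sm a then 1 else 0) * (if b \<in> D then 1 else 0)))"
      by (rule sum.cong) (simp_all add: fg sum_distrib_right distrib_right mult.assoc)
    also have "\<dots> = (\<Sum>a\<in>Q1. \<Sum>b\<in>Q1. f a * ((if b \<in> orb sp a then 1 else 0) * (if b \<in> D then 1 else 0))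
                     + g a * ((if b \<in> orb sm a then 1 else 0) * (if b \<in> D then 1 else 0)))"
      by (rule sum.swap)
    also have "\<dots> = (\<Sum>a\<in>Q1. f a * int (card (D \<inter> orb sp a)) + g a * int (card (D \<inter> orb sm a)))"
      proof (rule sum.cong)
      fix a assume "a \<in> Q1"
      have "(\<Sum>b\<in>Q1. f a * ((if b \<in> orb sp a then 1 else 0) * (if b \<in> D then 1 else 0))
                     + g a * ((if b \<in> orb sm a then 1 else 0) * (if b \<in> D then 1 else 0)))
          = f a * (\<Sum>b\<in>Q1. (if b \<in> orb sp a then 1 else 0) * (if b \<in> D then 1 else 0))
            + g a * (\<Sum>b\<in>Q1. (if b \<in> orb sm a then 1 else 0) * (if b \<in> D then 1 else 0))"
        by (simp only: sum.distrib sum_distrib_left)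
      then show "(\<Sum>b\<in>Q1. f a * ((if b \<in> orb sp a then 1 else 0) * (if b \<in> D then 1 else 0))
                     + g a * ((if b \<in> orb sm a then 1 else 0) * (if b \<in> D then 1 else 0)))
          = f a * int (card (D \<inter> orb sp a)) + g a * int (card (D \<inter> orb sm a))"
        by (simp only: cardeq)
    qed simp
    also have "\<dots> = n" unfolding n_def by (rule sum.cong) (simp_all add: c1)
    finally show ?thesis by simp
  qed
  have eq: "eq_sigma_pow S (tau_bar S p) (tau_bar S q) n"
    unfolding eq_sigma_pow_def
  proof
    fix D show "int (tau_bar S p D) = int (tau_bar S q D) + n * int (sigma_mono S D)"
      using key[of D] by (cases "D \<in> S") (simp_all add: sigma_mono_def tau_bar_def)
  qed
  have "tau_bar S p = tau_bar S q"
    if np: "\<not> mono_dvd (sigma_mono S) (tau_bar S p)" and nq: "\<not> mono_dvd (sigma_mono S) (tau_bar S q)"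
  proof -
    obtain D1 where D1: "\<not> sigma_mono S D1 \<le> tau_bar S p D1" using np unfolding mono_dvd_def by auto
    obtain D2 where D2: "\<not> sigma_mono S D2 \<le> tau_bar S q D2" using nq unfolding mono_dvd_def by auto
    have D1S: "D1 \<in> S" "tau_bar S p D1 = 0" using D1 by (auto simp: sigma_mono_def split: if_splits)
    have D2S: "D2 \<in> S" "tau_bar S q D2 = 0" using D2 by (auto simp: sigma_mono_def split: if_splits)
    have "n \<le> 0" using key[OF D1S(1)] D1S(2) by simp
    moreover have "n \<ge> 0" using key[OF D2S(1)] D2S(2) by simp
    ultimately have n0: "n = 0" by simp
    show ?thesis
    proof
      fix D show "tau_bar S p D = tau_bar S q D"
        using key[of D] n0 by (cases "D \<in> S") (simp_all add: tau_bar_def)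
    qed
  qed
  then show ?thesis using eq by blast
qed

end
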